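(* There exists $\theta\in(0,1/\sqrt3)$ such that for every $\eta>0$, every $\rho>0$ and every $\theta$-bad plane $L$ for $Q_\rho$ (with unit normal $\nu=(\nu_1,\nu_2,\nu_3)$) the following holds: there is exactly one index $k\in\{1,2,3\}$ with $|\nu_k|\ge\theta$, and $$\text{either}\quad -\tfrac{3\rho}{4}<x\cdot e_k<-\tfrac{\rho}{4}\ \ \forall x\in L\cap Q_{3\rho},\qquad\text{or}\quad \tfrac{\rho}{4}<x\cdot e_k<\tfrac{3\rho}{4}\ \ \forall x\in L\cap Q_{3\rho}.$$
   Context: Here $Q_\rho=\rho[-\frac12,\frac12)^3\subset\mathbb R^3$ is centered at the origin and $Q_{3\rho}=3\rho[-\frac12,\frac12)^3$. For $A\subset\mathbb R^3$ and $s>0$, $(A)_s:=\{x:\mathrm{dist}(x,A)<s\}$. Given $\theta\in(0,1/\sqrt3)$ and $\eta>0$, a plane $L\subset\mathbb R^3$ with unit normal $\nu=(\nu_1,\nu_2,\nu_3)$ and $(L)_{3\eta\rho}\cap Q_\rho\ne\emptyset$ is called $\theta$-good for $Q_\rho$ if either (1) there are $i\ne j$ in $\{1,2,3\}$ with $|\nu_i|,|\nu_j|\ge\theta$, or (2) there is $k$ with $|\nu_k|\ge\theta$ and $\mathrm{dist}\big(L\cap Q_{3\rho},\{x_k=-\rho/2\}\cup\{x_k=\rho/2\}\big)\ge20\theta\rho$. Such a plane which is not $\theta$-good is called $\theta$-bad for $Q_\rho$. $e_k$ is the $k$-th standard basis vector. *)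

theory Defs
  imports "HOL-Analysis.Analysis"
begin

definition cube :: "real \<Rightarrow> (real^3) set" where
  "cube \<rho> = {x. \<forall>i. - \<rho> / 2 \<le> x $ i \<and> x $ i < \<rho> / 2}"

definition nbhd :: "(real^3) set \<Rightarrow> real \<Rightarrow> (real^3) set" where
  "nbhd A s = {x. infdist x A < s}"

definition plane :: "real^3 \<Rightarrow> real \<Rightarrow> (real^3) set" where
  "plane \<nu> c = {x. \<nu> \<bullet> x = c}"

definition faces :: "3 \<Rightarrow> real \<Rightarrow> (real^3) set" where
  "faces k \<rho> = {x. x \<bullet> axis k 1 = - \<rho> / 2} \<union> {x. x \<bullet> axis k 1 = \<rho> / 2}"

text \<open>dist(A,B) \<ge> d, with the convention inf of the empty set = +infinity.\<close>
definition set_dist_ge :: "(real^3) set \<Rightarrow> (real^3) set \<Rightarrow> real \<Rightarrow> bool" where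
  "set_dist_ge A B d \<longleftrightarrow> (\<forall>x\<in>A. \<forall>y\<in>B. d \<le> dist x y)"

definition admissible_plane :: "real \<Rightarrow> real \<Rightarrow> real^3 \<Rightarrow> real \<Rightarrow> bool" where
  "admissible_plane \<eta> \<rho> \<nu> c \<longleftrightarrow> nbhd (plane \<nu> c) (3 * \<eta> * \<rho>) \<inter> cube \<rho> \<noteq> {}"

definition theta_good :: "real \<Rightarrow> real \<Rightarrow> real \<Rightarrow> real^3 \<Rightarrow> real \<Rightarrow> bool" where
  "theta_good \<theta> \<eta> \<rho> \<nu> c \<longleftrightarrow> admissible_plane \<eta> \<rho> \<nu> c \<and>
     ((\<exists>i j. i \<noteq> j \<and> \<bar>\<nu> $ i\<bar> \<ge> \<theta> \<and> \<bar>\<nu> $ j\<bar> \<ge> \<theta>) \<or>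
      (\<exists>k. \<bar>\<nu> $ k\<bar> \<ge> \<theta> \<and>
           set_dist_ge (plane \<nu> c \<inter> cube (3 * \<rho>)) (faces k \<rho>) (20 * \<theta> * \<rho>)))"

definition theta_bad :: "real \<Rightarrow> real \<Rightarrow> real \<Rightarrow> real^3 \<Rightarrow> real \<Rightarrow> bool" where
  "theta_bad \<theta> \<eta> \<rho> \<nu> c \<longleftrightarrow> admissible_plane \<eta> \<rho> \<nu> c \<and> \<not> theta_good \<theta> \<eta> \<rho> \<nu> c"

end

theory Submission
  imports Defs
begin

lemma key:
  fixes a b c d1 d2 d3 r :: real
  assumes "a^2+b^2+c^2=1" "\<bar>b\<bar> < 1/200" "\<bar>c\<bar> < 1/200" "a*d1+b*d2+c*d3=0"
    "\<bar>d2\<bar> < 3*r" "\<bar>d3\<bar> < 3*r"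
  shows "\<bar>d1\<bar> \<le> 12/200 * r"
proof -
  have b2: "b^2 \<le> 1/40000"
  proof -
    have "\<bar>b\<bar> * \<bar>b\<bar> \<le> 1/200 * (1/200)"
      using assms(2) by (intro mult_mono) auto
    then show ?thesis by (simp add: power2_eq_square abs_mult_self_eq)
  qed
  have c2: "c^2 \<le> 1/40000"
  proof -
    have "\<bar>c\<bar> * \<bar>c\<bar> \<le> 1/200 * (1/200)"
      using assms(3) by (intro mult_mono) auto
    then show ?thesis by (simp add: power2_eq_square abs_mult_self_eq)
  qed
  have a2: "a^2 > 1/4" using assms(1) b2 c2 by linarith
  have ha: "\<bar>a\<bar> \<ge> 1/2"
  proof (rule ccontr)
    assume "\<not> \<bar>a\<bar> \<ge> 1/2"
    then have "\<bar>a\<bar> * \<bar>a\<bar> \<le> 1/2 * (1/2)" by (intro mult_mono) auto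
    then show False using a2 by (simp add: power2_eq_square abs_mult_self_eq)
  qed
  have r0: "r \<ge> 0" using assms(5) by linarith
  have "\<bar>b*d2\<bar> \<le> 1/200 * (3*r)" unfolding abs_mult
    using assms(2,5) by (intro mult_mono) auto
  moreover have "\<bar>c*d3\<bar> \<le> 1/200 * (3*r)" unfolding abs_mult
    using assms(3,6) by (intro mult_mono) auto
  moreover have "a*d1 = -(b*d2+c*d3)" using assms(4) by linarith
  ultimately have ad: "\<bar>a\<bar>*\<bar>d1\<bar> \<le> 6/200 * r" unfolding abs_mult[symmetric] by linarith
  have "1/2 * \<bar>d1\<bar> \<le> \<bar>a\<bar>*\<bar>d1\<bar>" using ha by (intro mult_right_mono) auto
  then show ?thesis using ad by linarith
qed

lemma plane_coords: "z \<in> plane \<nu> c \<longleftrightarrow> \<nu>$1*z$1+\<nu>$2*z$2+\<nu>$3*z$3 = c"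
  by (simp add: plane_def inner_vec_def sum_3)

lemma cube_coords: "z \<in> cube r \<Longrightarrow> - r/2 \<le> z$i \<and> z$i < r/2"
  by (simp add: cube_def)

theorem lemma2p21:
  shows "\<exists>\<theta>::real. 0 < \<theta> \<and> \<theta> < 1 / sqrt 3 \<and>
    (\<forall>\<eta>::real. \<forall>\<rho>::real. \<forall>\<nu>::real^3. \<forall>c::real.
       \<eta> > 0 \<longrightarrow> \<rho> > 0 \<longrightarrow> norm \<nu> = 1 \<longrightarrow> theta_bad \<theta> \<eta> \<rho> \<nu> c \<longrightarrow>
       (\<exists>!k. \<bar>\<nu> $ k\<bar> \<ge> \<theta>) \<and>
       (\<forall>k. \<bar>\<nu> $ k\<bar> \<ge> \<theta> \<longrightarrow>
          ((\<forall>x \<in> plane \<nu> c \<inter> cube (3 * \<rho>).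
              - 3 * \<rho> / 4 < x \<bullet> axis k 1 \<and> x \<bullet> axis k 1 < - \<rho> / 4) \<or>
           (\<forall>x \<in> plane \<nu> c \<inter> cube (3 * \<rho>).
              \<rho> / 4 < x \<bullet> axis k 1 \<and> x \<bullet> axis k 1 < 3 * \<rho> / 4))))"
proof (intro exI[of _ "1/200"] conjI allI impI)
  show "0 < (1/200::real)" by simp
  have "sqrt 3 < sqrt 4" by (intro real_sqrt_less_mono) simp
  then have "sqrt 3 < 2" by simp
  then show "1/200 < 1 / sqrt 3" by (simp add: field_simps)
  fix \<eta> \<rho> :: real and \<nu> :: "real^3" and c :: real
  assume eta: "\<eta> > 0" and rho: "\<rho> > 0" and n1: "norm \<nu> = 1"
    and bad: "theta_bad (1/200) \<eta> \<rho> \<nu> c"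
  have "\<nu> \<bullet> \<nu> = 1" using n1 by (simp add: norm_eq_1)
  then have sq: "(\<nu>$1)^2+(\<nu>$2)^2+(\<nu>$3)^2 = 1"
    by (simp add: inner_vec_def sum_3 power2_eq_square)
  have ng: "\<not> theta_good (1/200) \<eta> \<rho> \<nu> c" using bad unfolding theta_bad_def by blast
  have adm: "admissible_plane \<eta> \<rho> \<nu> c" using bad unfolding theta_bad_def by blast
  have nottwo: "\<bar>\<nu>$j\<bar> < 1/200" if "i \<noteq> j" "\<bar>\<nu>$i\<bar> \<ge> 1/200" for i j
  proof (rule ccontr)
    assume "\<not> ?thesis"
    then have "\<bar>\<nu>$j\<bar> \<ge> 1/200" by simp
    with that have "theta_good (1/200) \<eta> \<rho> \<nu> c" using adm unfolding theta_good_def by blast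
    with ng show False by blast
  qed
  have notdist: "\<not> set_dist_ge (plane \<nu> c \<inter> cube (3 * \<rho>)) (faces k \<rho>) (20 * (1/200) * \<rho>)"
    if "\<bar>\<nu>$k\<bar> \<ge> 1/200" for k
  proof
    assume "set_dist_ge (plane \<nu> c \<inter> cube (3 * \<rho>)) (faces k \<rho>) (20 * (1/200) * \<rho>)"
    with that have "theta_good (1/200) \<eta> \<rho> \<nu> c" using adm unfolding theta_good_def by blast
    with ng show False by blast
  qed
  have ex: "\<exists>k. \<bar>\<nu>$k\<bar> \<ge> 1/200"
  proof (rule ccontr)
    assume "\<not> ?thesis"
    then have h: "\<And>k. \<bar>\<nu>$k\<bar> < 1/200" by (meson not_le)
    have sqb: "(\<nu>$k)^2 \<le> 1/40000" for k
    proof -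
      have "\<bar>\<nu>$k\<bar> * \<bar>\<nu>$k\<bar> \<le> 1/200 * (1/200)"
        using h[of k] by (intro mult_mono) auto
      then show ?thesis by (simp add: power2_eq_square abs_mult_self_eq)
    qed
    show False using sq sqb[of 1] sqb[of 2] sqb[of 3] by linarith
  qed
  then show "\<exists>!k. \<bar>\<nu> $ k\<bar> \<ge> 1/200"
    using nottwo by (meson not_le)
  fix k :: 3
  assume kbig: "\<bar>\<nu>$k\<bar> \<ge> 1/200"
  obtain x y where x: "x \<in> plane \<nu> c \<inter> cube (3 * \<rho>)" and y: "y \<in> faces k \<rho>"
    and dxy: "dist x y < 20 * (1/200) * \<rho>"
    using notdist[OF kbig] unfolding set_dist_ge_def by (meson not_le)
  have "\<bar>(x - y)$k\<bar> \<le> norm (x - y)" by (rule component_le_norm_cart)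
  then have xy: "\<bar>x$k - y$k\<bar> < \<rho>/10" using dxy by (simp add: dist_norm)
  have yk: "y$k = -\<rho>/2 \<or> y$k = \<rho>/2" using y by (auto simp: faces_def inner_axis)
  have claim: "\<bar>z$k - x$k\<bar> \<le> 12/200 * \<rho>" if z: "z \<in> plane \<nu> c \<inter> cube (3 * \<rho>)" for z
  proof -
    have pz: "\<nu>$1*z$1+\<nu>$2*z$2+\<nu>$3*z$3 = c" using z plane_coords by blast
    have px: "\<nu>$1*x$1+\<nu>$2*x$2+\<nu>$3*x$3 = c" using x plane_coords by blast
    have eq: "\<nu>$1*(z$1-x$1)+\<nu>$2*(z$2-x$2)+\<nu>$3*(z$3-x$3) = 0"
      using pz px by (simp add: algebra_simps)
    have d: "\<And>i. \<bar>z$i - x$i\<bar> < 3*\<rho>"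
    proof -
      fix i
      have "- (3*\<rho>)/2 \<le> z$i \<and> z$i < (3*\<rho>)/2" using z cube_coords by blast
      moreover have "- (3*\<rho>)/2 \<le> x$i \<and> x$i < (3*\<rho>)/2" using x cube_coords by blast
      ultimately show "\<bar>z$i - x$i\<bar> < 3*\<rho>" by linarith
    qed
    consider "k = 1" | "k = 2" | "k = 3" using exhaust_3 by blast
    then show ?thesis
    proof cases
      case 1
      show ?thesis unfolding 1
        by (rule key[of "\<nu>$1" "\<nu>$2" "\<nu>$3" _ "z$2-x$2" "z$3-x$3"])
          (use sq eq d nottwo[of 1 2] nottwo[of 1 3] kbig 1 in auto)
    next
      case 2
      show ?thesis unfolding 2
        by (rule key[of "\<nu>$2" "\<nu>$1" "\<nu>$3" _ "z$1-x$1" "z$3-x$3"])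
          (use sq eq d nottwo[of 2 1] nottwo[of 2 3] kbig 2 in \<open>auto simp: algebra_simps\<close>)
    next
      case 3
      show ?thesis unfolding 3
        by (rule key[of "\<nu>$3" "\<nu>$1" "\<nu>$2" _ "z$1-x$1" "z$2-x$2"])
          (use sq eq d nottwo[of 3 1] nottwo[of 3 2] kbig 3 in \<open>auto simp: algebra_simps\<close>)
    qed
  qed
  from yk show "(\<forall>x \<in> plane \<nu> c \<inter> cube (3 * \<rho>).
              - 3 * \<rho> / 4 < x \<bullet> axis k 1 \<and> x \<bullet> axis k 1 < - \<rho> / 4) \<or>
           (\<forall>x \<in> plane \<nu> c \<inter> cube (3 * \<rho>).
              \<rho> / 4 < x \<bullet> axis k 1 \<and> x \<bullet> axis k 1 < 3 * \<rho> / 4)"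
  proof
    assume yk': "y$k = -\<rho>/2"
    have "\<forall>z \<in> plane \<nu> c \<inter> cube (3 * \<rho>).
              - 3 * \<rho> / 4 < z \<bullet> axis k 1 \<and> z \<bullet> axis k 1 < - \<rho> / 4"
    proof
      fix z assume z: "z \<in> plane \<nu> c \<inter> cube (3 * \<rho>)"
      have cl: "\<bar>z$k - x$k\<bar> \<le> 12/200 * \<rho>" using claim[OF z] .
      have zk: "z \<bullet> axis k 1 = z$k" by (simp add: inner_axis)
      then show "- 3 * \<rho> / 4 < z \<bullet> axis k 1 \<and> z \<bullet> axis k 1 < - \<rho> / 4"
        using xy rho yk' cl unfolding zk abs_le_iff abs_less_iff by linarith
    qed
    then show ?thesis ..
  next
    assume yk': "y$k = \<rho>/2"
    have "\<forall>z \<in> plane \<nu> c \<inter> cube (3 * \<rho>).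
              \<rho> / 4 < z \<bullet> axis k 1 \<and> z \<bullet> axis k 1 < 3 * \<rho> / 4"
    proof
      fix z assume z: "z \<in> plane \<nu> c \<inter> cube (3 * \<rho>)"
      have cl: "\<bar>z$k - x$k\<bar> \<le> 12/200 * \<rho>" using claim[OF z] .
      have zk: "z \<bullet> axis k 1 = z$k" by (simp add: inner_axis)
      then show "\<rho> / 4 < z \<bullet> axis k 1 \<and> z \<bullet> axis k 1 < 3 * \<rho> / 4"
        using xy rho yk' cl unfolding zk abs_le_iff abs_less_iff by linarith
    qed
    then show ?thesis ..
  qed
qed

end
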